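(* Let $\mathcal{G}=(\mathcal{P},\mathcal{L})$ be a Fischer space of symplectic type, let $R$ be a commutative ring with $2=0$, let $A=M_R(\mathcal{G},1)$ and let $\ell\in\mathcal{L}$. Then $\operatorname{ad}_\ell$ is idempotent, i.e. $\ell\cdot(\ell v)=\ell v$ for all $v\in A$.
   Context: A 3-transposition group is a pair $(G,D)$ where $D$ is a conjugacy class of involutions generating $G$ with $de$ of order at most $3$ for all $d,e\in D$. Its Fischer space $\mathcal{G}=(\mathcal{P},\mathcal{L})$ has $\mathcal{P}=D$ and as lines the $3$-subsets consisting of the three involutions of a subgroup isomorphic to $\mathrm{Sym}(3)$. Distinct points on a common line are collinear ($p\sim q$), and $p\wedge q$ is the third point. A subspace is a nonempty subset closed under $\wedge$. The subspace generated by two distinct intersecting lines is either a complete quadrilateral (6 points, 4 lines, any two lines meeting in one point, each point on two lines) or an affine plane of order $3$; $\mathcal{G}$ is of symplectic type if it is always a complete quadrilateral. The nilpotent Matsuo algebra $A=M_R(\mathcal{G},1)$ is the free $R$-module with basis $\mathcal{P}$ and commutative bilinear product $p\cdot q=0$ if $p=q$ or $p\not\sim q$, $p\cdot q=p+q+p\wedge q$ if $p\sim q$. A line $\ell$ is identified with the sum of its three points in $A$, and $\operatorname{ad}_\ell(v)=\ell v$. *)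

theory Defs
  imports "HOL-Algebra.Generated_Groups"
begin

definition three_transposition_group :: "('a, 'b) monoid_scheme \<Rightarrow> 'a set \<Rightarrow> bool" where
  "three_transposition_group G D \<longleftrightarrow>
     group G \<and> D \<subseteq> carrier G \<and>
     (\<exists>d \<in> carrier G. D = {inv\<^bsub>G\<^esub> g \<otimes>\<^bsub>G\<^esub> d \<otimes>\<^bsub>G\<^esub> g | g. g \<in> carrier G}) \<and>
     (\<forall>d \<in> D. d \<noteq> \<one>\<^bsub>G\<^esub> \<and> d \<otimes>\<^bsub>G\<^esub> d = \<one>\<^bsub>G\<^esub>) \<and>
     generate G D = carrier G \<and>
     (\<forall>d \<in> D. \<forall>e \<in> D. \<exists>n::nat. 1 \<le> n \<and> n \<le> 3 \<and> (d \<otimes>\<^bsub>G\<^esub> e) [^]\<^bsub>G\<^esub> n = \<one>\<^bsub>G\<^esub>)"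

text \<open>Distinct points p, q of D are collinear iff pq has order 3, i.e. they generate a
  subgroup isomorphic to Sym(3); the third point of the line is p \<and> q = pqp.\<close>
definition fcoll :: "('a, 'b) monoid_scheme \<Rightarrow> 'a set \<Rightarrow> 'a \<Rightarrow> 'a \<Rightarrow> bool" where
  "fcoll G D p q \<longleftrightarrow> p \<in> D \<and> q \<in> D \<and> p \<noteq> q \<and> (p \<otimes>\<^bsub>G\<^esub> q) [^]\<^bsub>G\<^esub> (3::nat) = \<one>\<^bsub>G\<^esub>"

definition fwedge :: "('a, 'b) monoid_scheme \<Rightarrow> 'a \<Rightarrow> 'a \<Rightarrow> 'a" where
  "fwedge G p q = p \<otimes>\<^bsub>G\<^esub> q \<otimes>\<^bsub>G\<^esub> p"

definition flines :: "('a, 'b) monoid_scheme \<Rightarrow> 'a set \<Rightarrow> 'a set set" where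
  "flines G D = {{p, q, fwedge G p q} | p q. fcoll G D p q}"

definition fsubspace :: "('a, 'b) monoid_scheme \<Rightarrow> 'a set \<Rightarrow> 'a set \<Rightarrow> bool" where
  "fsubspace G D S \<longleftrightarrow> S \<noteq> {} \<and> S \<subseteq> D \<and>
     (\<forall>p \<in> S. \<forall>q \<in> S. fcoll G D p q \<longrightarrow> fwedge G p q \<in> S)"

definition fgen :: "('a, 'b) monoid_scheme \<Rightarrow> 'a set \<Rightarrow> 'a set \<Rightarrow> 'a set" where
  "fgen G D X = \<Inter> {S. fsubspace G D S \<and> X \<subseteq> S}"

definition complete_quadrilateral :: "('a, 'b) monoid_scheme \<Rightarrow> 'a set \<Rightarrow> 'a set \<Rightarrow> bool" where
  "complete_quadrilateral G D S \<longleftrightarrow>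
     card S = 6 \<and>
     card {l \<in> flines G D. l \<subseteq> S} = 4 \<and>
     (\<forall>l \<in> {l \<in> flines G D. l \<subseteq> S}. \<forall>m \<in> {l \<in> flines G D. l \<subseteq> S}.
        l \<noteq> m \<longrightarrow> card (l \<inter> m) = 1) \<and>
     (\<forall>p \<in> S. card {l \<in> flines G D. l \<subseteq> S \<and> p \<in> l} = 2)"

definition symplectic_type :: "('a, 'b) monoid_scheme \<Rightarrow> 'a set \<Rightarrow> bool" where
  "symplectic_type G D \<longleftrightarrow>
     (\<forall>l \<in> flines G D. \<forall>m \<in> flines G D. l \<noteq> m \<and> l \<inter> m \<noteq> {} \<longrightarrow>
        complete_quadrilateral G D (fgen G D (l \<union> m)))"

text \<open>Elements of the free R-module with basis D: finitely supported functions D \<rightarrow> R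
  (zero outside D). The basis vector of p is the indicator function of p.\<close>
definition matsuo_carrier :: "'a set \<Rightarrow> ('a \<Rightarrow> 'r::comm_ring_1) set" where
  "matsuo_carrier D = {v. finite {x. v x \<noteq> 0} \<and> {x. v x \<noteq> 0} \<subseteq> D}"

definition basis_vec :: "'a \<Rightarrow> 'a \<Rightarrow> 'r::comm_ring_1" where
  "basis_vec p = (\<lambda>x. if x = p then 1 else 0)"

definition matsuo_bprod :: "('a, 'b) monoid_scheme \<Rightarrow> 'a set \<Rightarrow> 'a \<Rightarrow> 'a \<Rightarrow> 'a \<Rightarrow> 'r::comm_ring_1" where
  "matsuo_bprod G D p q =
     (if fcoll G D p q then (\<lambda>x. basis_vec p x + basis_vec q x + basis_vec (fwedge G p q) x)
      else (\<lambda>x. 0))"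

definition matsuo_mult :: "('a, 'b) monoid_scheme \<Rightarrow> 'a set \<Rightarrow>
    ('a \<Rightarrow> 'r::comm_ring_1) \<Rightarrow> ('a \<Rightarrow> 'r) \<Rightarrow> ('a \<Rightarrow> 'r)" where
  "matsuo_mult G D u v = (\<lambda>x. \<Sum>p \<in> {y. u y \<noteq> 0}. \<Sum>q \<in> {y. v y \<noteq> 0}.
       u p * v q * matsuo_bprod G D p q x)"

text \<open>A line, viewed as the sum of its three points in A.\<close>
definition line_vec :: "'a set \<Rightarrow> 'a \<Rightarrow> 'r::comm_ring_1" where
  "line_vec l = (\<lambda>x. if x \<in> l then 1 else 0)"

end

theory Submission
  imports Defs
begin


locale tt = group G for G (structure) +
  fixes D
  assumes DG: "D \<subseteq> carrier G"
    and conjD: "\<And>x g. x \<in> D \<Longrightarrow> g \<in> carrier G \<Longrightarrow> inv g \<otimes> x \<otimes> g \<in> D"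
    and invol: "\<And>d. d \<in> D \<Longrightarrow> d \<otimes> d = \<one>"
    and ord3: "\<And>d e. d \<in> D \<Longrightarrow> e \<in> D \<Longrightarrow> \<exists>n::nat. 1 \<le> n \<and> n \<le> 3 \<and> (d \<otimes> e) [^] n = \<one>"
begin

lemma Dc [simp]: "d \<in> D \<Longrightarrow> d \<in> carrier G" using DG by auto

lemma cancel [simp]: "d \<in> D \<Longrightarrow> y \<in> carrier G \<Longrightarrow> d \<otimes> (d \<otimes> y) = y"
  by (simp add: m_assoc[symmetric] invol)

lemma invol' [simp]: "d \<in> D \<Longrightarrow> d \<otimes> d = \<one>" by (rule invol)

lemma inv_D: "d \<in> D \<Longrightarrow> inv d = d"
  by (metis Dc inv_equality invol)

lemma fwedge_eq: "fwedge G p q = p \<otimes> (q \<otimes> p)" if "p \<in> D" "q \<in> D"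
  using that by (simp add: fwedge_def m_assoc)

lemma wedge_D: "p \<in> D \<Longrightarrow> q \<in> D \<Longrightarrow> p \<otimes> (q \<otimes> p) \<in> D"
  using conjD[of q p] by (simp add: inv_D m_assoc)

lemma fwedge_D: "p \<in> D \<Longrightarrow> q \<in> D \<Longrightarrow> fwedge G p q \<in> D"
  by (simp add: fwedge_eq wedge_D)

lemma one_eq: assumes "p \<in> D" "q \<in> D" "p \<otimes> q = \<one>" shows "p = q"
proof -
  have "q = p \<otimes> (p \<otimes> q)" using assms(1,2) by simp
  also have "\<dots> = p \<otimes> \<one>" using assms(3) by (simp only:)
  also have "\<dots> = p" using assms by simp
  finally show ?thesis by (rule sym)
qed

lemma cube: "x \<in> carrier G \<Longrightarrow> x [^] (3::nat) = x \<otimes> (x \<otimes> x)"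
  by (simp add: numeral_3_eq_3 m_assoc)

lemma fcoll_iff: "fcoll G D p q \<longleftrightarrow> p \<in> D \<and> q \<in> D \<and> p \<noteq> q \<and>
    p \<otimes> (q \<otimes> (p \<otimes> (q \<otimes> (p \<otimes> q)))) = \<one>"
  unfolding fcoll_def by (auto simp: cube m_assoc)

lemma fcoll_D: "fcoll G D p q \<Longrightarrow> p \<in> D \<and> q \<in> D \<and> p \<noteq> q"
  by (simp add: fcoll_iff)

lemma fcoll_cube: assumes "fcoll G D p q" "y \<in> carrier G"
  shows "p \<otimes> (q \<otimes> (p \<otimes> (q \<otimes> (p \<otimes> (q \<otimes> y))))) = y"
proof -
  from assms have p: "p \<in> D" "q \<in> D" and X: "p \<otimes> (q \<otimes> (p \<otimes> (q \<otimes> (p \<otimes> q)))) = \<one>"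
    by (auto simp: fcoll_iff)
  have "(p \<otimes> (q \<otimes> (p \<otimes> (q \<otimes> (p \<otimes> q))))) \<otimes> y = y" using X assms by simp
  then show ?thesis using p assms by (simp add: m_assoc)
qed

lemma fcoll_sym: assumes "fcoll G D p q" shows "fcoll G D q p"
proof -
  from assms have p: "p \<in> D" "q \<in> D" "p \<noteq> q" and X: "p \<otimes> (q \<otimes> (p \<otimes> (q \<otimes> (p \<otimes> q)))) = \<one>"
    by (auto simp: fcoll_iff)
  have "q \<otimes> ((p \<otimes> (q \<otimes> (p \<otimes> (q \<otimes> (p \<otimes> q))))) \<otimes> q) = \<one>" using X p by simp
  then have "q \<otimes> (p \<otimes> (q \<otimes> (p \<otimes> (q \<otimes> p)))) = \<one>" using p by (simp add: m_assoc)
  then show ?thesis using p by (simp add: fcoll_iff)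
qed

lemma noncoll_comm: assumes "p \<in> D" "q \<in> D" "p \<noteq> q" "\<not> fcoll G D p q"
  shows "p \<otimes> q = q \<otimes> p"
proof -
  obtain n :: nat where n: "1 \<le> n" "n \<le> 3" "(p \<otimes> q) [^] n = \<one>" using ord3 assms by blast
  have "n = 1 \<or> n = 2 \<or> n = 3" using n by auto
  moreover have "n \<noteq> 1"
  proof
    assume "n = 1"
    then have "p \<otimes> q = \<one>" using n assms by simp
    then have "p \<otimes> (p \<otimes> q) = p" using assms by simp
    then show False using assms by simp
  qed
  moreover have "n \<noteq> 3" using n assms unfolding fcoll_def by auto
  ultimately have "n = 2" by auto
  then have X: "p \<otimes> (q \<otimes> (p \<otimes> q)) = \<one>" using n assms by (simp add: numeral_2_eq_2 m_assoc)
  have "q \<otimes> (p \<otimes> (p \<otimes> (q \<otimes> (p \<otimes> q)))) = p \<otimes> q" using assms by simp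
  then show ?thesis using X assms by simp
qed

lemma comm_noncoll: assumes "p \<in> D" "q \<in> D" "p \<otimes> q = q \<otimes> p" shows "\<not> fcoll G D p q"
proof
  assume f: "fcoll G D p q"
  have "q \<otimes> (p \<otimes> q) = q \<otimes> (q \<otimes> p)" using assms by simp
  also have "\<dots> = p" using assms by simp
  finally have e: "q \<otimes> (p \<otimes> q) = p" .
  have "\<one> = p \<otimes> (q \<otimes> (p \<otimes> (q \<otimes> (p \<otimes> q))))" using f by (simp add: fcoll_iff)
  also have "\<dots> = p \<otimes> q" using e assms by simp
  finally have "p = q" using assms one_eq by simp
  then show False using f assms by (simp add: fcoll_iff)
qed

lemma braid: assumes "fcoll G D p q" shows "p \<otimes> (q \<otimes> p) = q \<otimes> (p \<otimes> q)"
proof -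
  from assms have p: "p \<in> D" "q \<in> D" by (auto simp: fcoll_iff)
  have "p \<otimes> (q \<otimes> (p \<otimes> (q \<otimes> (p \<otimes> (q \<otimes> (q \<otimes> (p \<otimes> q))))))) = q \<otimes> (p \<otimes> q)"
    using fcoll_cube[OF assms, of "q \<otimes> (p \<otimes> q)"] p by simp
  then show ?thesis using p by simp
qed

lemma conj_back: "a \<in> D \<Longrightarrow> q \<in> D \<Longrightarrow> a \<otimes> (a \<otimes> (q \<otimes> a) \<otimes> a) = q"
  by (simp add: m_assoc)

lemma coll_wedge: assumes "fcoll G D p q"
  shows "fcoll G D p (p \<otimes> (q \<otimes> p))"
proof -
  from assms have p: "p \<in> D" "q \<in> D" "p \<noteq> q" by (auto simp: fcoll_iff)
  have ne: "p \<noteq> p \<otimes> (q \<otimes> p)"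
  proof
    assume "p = p \<otimes> (q \<otimes> p)"
    then have "p \<otimes> p = p \<otimes> (p \<otimes> (q \<otimes> p))" by simp
    then have "q \<otimes> p = \<one>" using p by simp
    then show False using p one_eq by auto
  qed
  have "p \<otimes> (p \<otimes> (q \<otimes> p) \<otimes> (p \<otimes> (p \<otimes> (q \<otimes> p) \<otimes> (p \<otimes> (p \<otimes> (q \<otimes> p)))))) = \<one>"
    using fcoll_sym[OF assms] p by (simp add: m_assoc fcoll_iff)
  then show ?thesis using p ne wedge_D by (simp add: fcoll_iff m_assoc)
qed

lemma wedge_sym: assumes "fcoll G D p q" shows "fwedge G q p = fwedge G p q"
proof -
  have "p \<otimes> (q \<otimes> p) = q \<otimes> (p \<otimes> q)" using braid assms by blast
  then show ?thesis using fcoll_D[OF assms] by (simp add: fwedge_eq)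
qed

lemma wedge_wedge: "fcoll G D p q \<Longrightarrow> fcoll G D p (fwedge G p q) \<and> fwedge G p (fwedge G p q) = q"
  using coll_wedge[of p q] fcoll_D[of p q] wedge_D[of p q] by (simp add: fwedge_eq m_assoc)

definition tri where "tri a b c \<longleftrightarrow> fcoll G D a b \<and> c = fwedge G a b"

lemma tri_swap12: "tri a b c \<Longrightarrow> tri b a c"
  unfolding tri_def using fcoll_sym wedge_sym by metis

lemma tri_swap23: "tri a b c \<Longrightarrow> tri a c b"
  unfolding tri_def using wedge_wedge by metis

lemma tri_props: assumes "tri a b c"
  shows "a \<in> D" "b \<in> D" "c \<in> D" "a \<noteq> b" "a \<noteq> c" "b \<noteq> c"
proof -
  have t2: "tri a c b" "tri b a c" "tri b c a" using assms tri_swap12 tri_swap23 by blast+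
  have f: "fcoll G D a b" "fcoll G D a c" "fcoll G D b c" using assms t2 unfolding tri_def by blast+
  show "a \<in> D" "b \<in> D" "a \<noteq> b" "c \<in> D" "a \<noteq> c" "b \<noteq> c"
    using fcoll_D[OF f(1)] fcoll_D[OF f(2)] fcoll_D[OF f(3)] by auto
qed

lemma comm_prod: assumes "x \<in> carrier G" "y \<in> carrier G" "z \<in> carrier G"
  "x \<otimes> y = y \<otimes> x" "x \<otimes> z = z \<otimes> x" shows "x \<otimes> (y \<otimes> z) = (y \<otimes> z) \<otimes> x"
proof -
  have "x \<otimes> (y \<otimes> z) = (x \<otimes> y) \<otimes> z" using assms(1-3) by (simp add: m_assoc)
  also have "\<dots> = (y \<otimes> x) \<otimes> z" using assms(4) by (simp only:)
  also have "\<dots> = y \<otimes> (x \<otimes> z)" using assms(1-3) by (simp add: m_assoc)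
  also have "\<dots> = y \<otimes> (z \<otimes> x)" using assms(5) by (simp only:)
  also have "\<dots> = (y \<otimes> z) \<otimes> x" using assms(1-3) by (simp add: m_assoc)
  finally show ?thesis .
qed

lemma one_imp: assumes "tri a b c" "q \<in> D" "q \<notin> {a,b,c}" "\<not> fcoll G D b q" "\<not> fcoll G D c q"
  shows "\<not> fcoll G D a q"
proof -
  have t: "tri b c a" using assms(1) tri_swap12 tri_swap23 by blast
  note P = tri_props[OF assms(1)]
  have bq: "q \<otimes> b = b \<otimes> q" using noncoll_comm[of b q] assms P by auto
  have cq: "q \<otimes> c = c \<otimes> q" using noncoll_comm[of c q] assms P by auto
  have "q \<otimes> (c \<otimes> b) = (c \<otimes> b) \<otimes> q" using comm_prod[of q c b] bq cq P assms(2) by simp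
  then have "q \<otimes> (b \<otimes> (c \<otimes> b)) = (b \<otimes> (c \<otimes> b)) \<otimes> q"
    using comm_prod[of q b "c \<otimes> b"] bq P assms(2) by simp
  moreover have "a = b \<otimes> (c \<otimes> b)" using t P unfolding tri_def by (simp add: fwedge_eq)
  ultimately have "a \<otimes> q = q \<otimes> a" by simp
  then show ?thesis using comm_noncoll P assms by simp
qed

lemma two_facts: assumes "tri a b c" "q \<in> D" "q \<notin> {a,b,c}" "fcoll G D a q" "fcoll G D b q"
  "\<not> fcoll G D c q"
  shows "fcoll G D c (fwedge G a q)" "fwedge G c (fwedge G a q) = fwedge G b q"
    "\<not> fcoll G D b (fwedge G a q)"
proof -
  note P = tri_props[OF assms(1)]
  have cab: "c = a \<otimes> (b \<otimes> a)" using assms(1) P unfolding tri_def by (simp add: fwedge_eq)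
  have cba: "c = b \<otimes> (a \<otimes> b)" using tri_swap12[OF assms(1)] P unfolding tri_def by (simp add: fwedge_eq)
  have cq: "c \<otimes> q = q \<otimes> c" using noncoll_comm[of c q] assms P by auto
  have E: "fwedge G a q = a \<otimes> (q \<otimes> a)" "fwedge G b q = b \<otimes> (q \<otimes> b)" using P assms by (simp_all add: fwedge_eq)
  have ED: "a \<otimes> (q \<otimes> a) \<in> D" "b \<otimes> (q \<otimes> b) \<in> D" using P assms wedge_D by auto
  have cne: "c \<noteq> a \<otimes> (q \<otimes> a)"
  proof
    assume h: "c = a \<otimes> (q \<otimes> a)"
    have "q = a \<otimes> (a \<otimes> (q \<otimes> a) \<otimes> a)" using P(1) assms(2) by (simp add: m_assoc)
    also have "\<dots> = a \<otimes> (c \<otimes> a)" using h by simp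
    also have "\<dots> = b" using cab P by (simp add: m_assoc)
    finally show False using assms by simp
  qed
  have cube: "c \<otimes> (a \<otimes> (q \<otimes> a) \<otimes> (c \<otimes> (a \<otimes> (q \<otimes> a) \<otimes> (c \<otimes> (a \<otimes> (q \<otimes> a)))))) = \<one>"
  proof -
    have "c \<otimes> (a \<otimes> (q \<otimes> a) \<otimes> (c \<otimes> (a \<otimes> (q \<otimes> a) \<otimes> (c \<otimes> (a \<otimes> (q \<otimes> a)))))) = a \<otimes> (b \<otimes> (q \<otimes> (b \<otimes> (q \<otimes> (b \<otimes> (q \<otimes> a))))))"
      using P(1,2) assms(2) by (simp add: cab m_assoc)
    then show ?thesis using P(1,2) assms(2) fcoll_cube[OF assms(5), of a] by simp
  qed
  show "fcoll G D c (fwedge G a q)"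
  proof -
    have "c \<otimes> (a \<otimes> (q \<otimes> a) \<otimes> (c \<otimes> (a \<otimes> (q \<otimes> a) \<otimes> (c \<otimes> (a \<otimes> (q \<otimes> a)))))) = \<one>"
      by (rule cube)
    then have "fcoll G D c (a \<otimes> (q \<otimes> a))" using cne ED P by (simp only: fcoll_iff) simp
    then show ?thesis using E by simp
  qed
  have "c \<otimes> (q \<otimes> c) = (c \<otimes> q) \<otimes> c" using P assms by (simp add: m_assoc)
  also have "\<dots> = q" using cq P assms by (simp add: m_assoc)
  finally have H: "b \<otimes> (a \<otimes> (b \<otimes> (q \<otimes> (b \<otimes> (a \<otimes> b))))) = q" using cba P assms by (simp add: m_assoc)
  have "b \<otimes> ((b \<otimes> (a \<otimes> (b \<otimes> (q \<otimes> (b \<otimes> (a \<otimes> b)))))) \<otimes> b) = b \<otimes> (q \<otimes> b)"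
    using H by simp
  then have H2: "a \<otimes> (b \<otimes> (q \<otimes> (b \<otimes> a))) = b \<otimes> (q \<otimes> b)" using P assms by (simp add: m_assoc)
  show "fwedge G c (fwedge G a q) = fwedge G b q"
    using H2 P assms ED by (simp add: E fwedge_eq cab m_assoc)
  have "a \<otimes> (q \<otimes> a) \<otimes> b = a \<otimes> ((q \<otimes> c) \<otimes> a)" using P assms by (simp add: cab m_assoc)
  also have "\<dots> = a \<otimes> ((c \<otimes> q) \<otimes> a)" using cq by simp
  also have "\<dots> = b \<otimes> (a \<otimes> (q \<otimes> a))" using P assms by (simp add: cab m_assoc)
  finally have "b \<otimes> (a \<otimes> (q \<otimes> a)) = a \<otimes> (q \<otimes> a) \<otimes> b" by simp
  then have "\<not> fcoll G D b (a \<otimes> (q \<otimes> a))" using comm_noncoll[of b "a \<otimes> (q \<otimes> a)"] ED P by blast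
  then show "\<not> fcoll G D b (fwedge G a q)" using E(1) by metis
qed

end


definition ev :: "('a, 'b) monoid_scheme \<Rightarrow> 'a set \<Rightarrow> 'a set \<Rightarrow> 'a \<Rightarrow> 'a \<Rightarrow> 'r::comm_ring_1" where
  "ev G D l q = (\<lambda>x. \<Sum>p\<in>l. line_vec l p * matsuo_bprod G D p q x)"

lemma sumform:
  fixes u v :: "'a \<Rightarrow> 'r::comm_ring_1"
  assumes "finite U" "{y. u y \<noteq> 0} \<subseteq> U" "finite V" "{y. v y \<noteq> 0} \<subseteq> V"
  shows "matsuo_mult G D u v x = (\<Sum>q\<in>V. v q * (\<Sum>p\<in>U. u p * matsuo_bprod G D p q x))"
proof -
  have fu: "finite {y. u y \<noteq> 0}" and fv: "finite {y. v y \<noteq> 0}"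
    using assms finite_subset by blast+
  have "matsuo_mult G D u v x = (\<Sum>p\<in>{y. u y \<noteq> 0}. \<Sum>q\<in>{y. v y \<noteq> 0}. u p * v q * matsuo_bprod G D p q x)"
    by (simp add: matsuo_mult_def)
  also have "\<dots> = (\<Sum>p\<in>U. \<Sum>q\<in>{y. v y \<noteq> 0}. u p * v q * matsuo_bprod G D p q x)"
    by (rule sum.mono_neutral_left) (use assms in auto)
  also have "\<dots> = (\<Sum>p\<in>U. \<Sum>q\<in>V. u p * v q * matsuo_bprod G D p q x)"
    by (rule sum.cong[OF refl], rule sum.mono_neutral_left) (use assms in auto)
  also have "\<dots> = (\<Sum>q\<in>V. \<Sum>p\<in>U. u p * v q * matsuo_bprod G D p q x)"
    by (rule sum.swap)
  also have "\<dots> = (\<Sum>q\<in>V. v q * (\<Sum>p\<in>U. u p * matsuo_bprod G D p q x))"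
    by (simp add: sum_distrib_left ac_simps)
  finally show ?thesis .
qed

lemma basis_list_zero: "y \<notin> set zs \<Longrightarrow> sum_list (map (\<lambda>z. basis_vec z y) zs) = (0::'r::comm_ring_1)"
  by (induction zs) (auto simp: basis_vec_def)

lemma basis_list_sum:
  fixes K :: "'a \<Rightarrow> 'r::comm_ring_1"
  assumes "finite V" "set zs \<subseteq> V"
  shows "(\<Sum>q\<in>V. sum_list (map (\<lambda>z. basis_vec z q) zs) * K q) = sum_list (map K zs)"
  using assms(2)
proof (induction zs)
  case Nil then show ?case by simp
next
  case (Cons z zs)
  have "(\<Sum>q\<in>V. sum_list (map (\<lambda>z. basis_vec z q) (z # zs)) * K q)
      = (\<Sum>q\<in>V. basis_vec z q * K q) + (\<Sum>q\<in>V. sum_list (map (\<lambda>z. basis_vec z q) zs) * K q)"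
    by (simp add: distrib_right sum.distrib)
  also have "(\<Sum>q\<in>V. basis_vec z q * K q) = (\<Sum>q\<in>V. if q = z then K q else 0)"
    by (rule sum.cong) (auto simp: basis_vec_def)
  also have "\<dots> = K z"
    using Cons.prems assms(1) by (simp add: sum.delta')
  finally show ?case using Cons by simp
qed

lemma comb:
  fixes u :: "'a \<Rightarrow> 'r::comm_ring_1"
  assumes "finite U" "{y. u y \<noteq> 0} \<subseteq> U"
  shows "matsuo_mult G D u (\<lambda>y. sum_list (map (\<lambda>z. basis_vec z y) zs)) x
     = sum_list (map (\<lambda>z. \<Sum>p\<in>U. u p * matsuo_bprod G D p z x) zs)"
proof -
  have S: "{y. sum_list (map (\<lambda>z. basis_vec z y) zs) \<noteq> (0::'r)} \<subseteq> set zs"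
  proof
    fix y assume "y \<in> {y. sum_list (map (\<lambda>z. basis_vec z y) zs) \<noteq> (0::'r)}"
    then show "y \<in> set zs" using basis_list_zero[of y zs] by auto
  qed
  have "matsuo_mult G D u (\<lambda>y. sum_list (map (\<lambda>z. basis_vec z y) zs)) x
     = (\<Sum>q\<in>set zs. sum_list (map (\<lambda>z. basis_vec z q) zs) * (\<Sum>p\<in>U. u p * matsuo_bprod G D p q x))"
    by (rule sumform[OF assms(1,2) _ S]) simp
  also have "\<dots> = sum_list (map (\<lambda>z. \<Sum>p\<in>U. u p * matsuo_bprod G D p z x) zs)"
    by (rule basis_list_sum) auto
  finally show ?thesis .
qed

lemma mult_zero: "matsuo_mult G D u (\<lambda>y. 0::'r::comm_ring_1) = (\<lambda>y. 0)"
  by (simp add: matsuo_mult_def)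

lemma fgen_sup: "X \<subseteq> fgen G D X"
  unfolding fgen_def by blast

lemma fgen_closed: assumes "p \<in> fgen G D X" "q \<in> fgen G D X" "fcoll G D p q"
  shows "fwedge G p q \<in> fgen G D X"
  unfolding fgen_def
proof (rule InterI)
  fix S assume S: "S \<in> {S. fsubspace G D S \<and> X \<subseteq> S}"
  then have "p \<in> S" "q \<in> S" using assms(1,2) unfolding fgen_def by auto
  then show "fwedge G p q \<in> S" using S assms(3) unfolding fsubspace_def by blast
qed

lemma bprod_coll: "fcoll G D p q \<Longrightarrow> matsuo_bprod G D p q x = basis_vec p x + basis_vec q x + (basis_vec (fwedge G p q) x :: 'r::comm_ring_1)"
  by (simp add: matsuo_bprod_def)

lemma bprod_non: "\<not> fcoll G D p q \<Longrightarrow> matsuo_bprod G D p q x = (0 :: 'r::comm_ring_1)"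
  by (simp add: matsuo_bprod_def)

lemma bprod_supp: "matsuo_bprod G D p q x \<noteq> (0 :: 'r::comm_ring_1) \<Longrightarrow> x \<in> {p, q, fwedge G p q}"
  by (auto simp: matsuo_bprod_def basis_vec_def split: if_splits)

lemma two_lemmas:
  assumes "(2::'r::comm_ring_1) = 0"
  shows "\<And>y::'r. y + y = 0" "\<And>y z::'r. y + (y + z) = z"
proof -
  show h: "\<And>y::'r. y + y = 0" using assms by (metis mult_2 mult_zero_left)
  show "\<And>y z::'r. y + (y + z) = z" using h by (metis add.assoc add_0)
qed

context tt begin

lemma ev_tri: assumes "tri a b c" shows "ev G D {a,b,c} q x = matsuo_bprod G D a q x + matsuo_bprod G D b q x + (matsuo_bprod G D c q x :: 'r::comm_ring_1)"
  using tri_props[OF assms] by (simp add: ev_def line_vec_def)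

lemma tri_wedges: assumes "tri a b c"
  shows "fcoll G D b a" "fwedge G b a = c" "fcoll G D c a" "fwedge G c a = b"
proof -
  have t: "tri a c b" "tri b a c" using assms tri_swap12 tri_swap23 by blast+
  show "fcoll G D b a" "fwedge G b a = c" using t(2) unfolding tri_def by auto
  show "fcoll G D c a" using t(1) fcoll_sym unfolding tri_def by blast
  show "fwedge G c a = b" using t(1) wedge_sym unfolding tri_def by metis
qed

lemma ev_in: assumes "tri a b c" "(2::'r::comm_ring_1) = 0"
  shows "ev G D {a,b,c} a x = (0::'r)"
proof -
  note h = two_lemmas[OF assms(2)]
  have "\<not> fcoll G D a a" using fcoll_D by blast
  then show ?thesis using tri_wedges[OF assms(1)]
    by (simp add: ev_tri[OF assms(1)] bprod_coll bprod_non ac_simps h)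
qed

lemma ev_in_set: assumes "tri a b c" "l = {a,b,c}" "q \<in> l" "(2::'r::comm_ring_1) = 0"
  shows "ev G D l q = (\<lambda>x. 0::'r)"
proof
  fix x
  have t: "tri b a c" "tri c a b" using assms(1) tri_swap12 tri_swap23 by blast+
  have e: "{b,a,c} = {a,b,c}" "{c,a,b} = {a,b,c}" by auto
  show "ev G D l q x = (0::'r)"
    using assms ev_in[OF assms(1) assms(4)] ev_in[OF t(1) assms(4)] ev_in[OF t(2) assms(4)] e by auto
qed

lemma wedge_back: "a \<in> D \<Longrightarrow> q \<in> D \<Longrightarrow> fwedge G a (fwedge G a q) = q"
  using wedge_wedge fcoll_D noncoll_comm
  by (simp add: fwedge_eq wedge_D m_assoc)

lemma two_case:
  assumes t: "tri a b c" and l: "l = {a,b,c}" and q: "q \<in> D" "q \<notin> {a,b,c}"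
    and f: "fcoll G D a q" "fcoll G D b q" "\<not> fcoll G D c q" and two: "(2::'r::comm_ring_1) = 0"
  shows "matsuo_mult G D (line_vec l) (ev G D l q) = (ev G D l q :: 'a \<Rightarrow> 'r)"
proof
  fix x
  note h = two_lemmas[OF two]
  have t2: "tri b a c" using t tri_swap12 by blast
  have lb: "l = {b,a,c}" using l by auto
  define E where "E = fwedge G a q"
  define F where "F = fwedge G b q"
  have TF1: "fcoll G D c E" "fwedge G c E = F" "\<not> fcoll G D b E"
    using two_facts[OF t q f] unfolding E_def F_def by auto
  have TF2: "fcoll G D c F" "fwedge G c F = E" "\<not> fcoll G D a F"
    using two_facts[OF t2 q(1) _ f(2) f(1) f(3)] q(2) unfolding E_def F_def by auto
  have WW1: "fcoll G D a E" "fwedge G a E = q" using wedge_wedge[OF f(1)] unfolding E_def by auto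
  have WW2: "fcoll G D b F" "fwedge G b F = q" using wedge_wedge[OF f(2)] unfolding F_def by auto
  have evq: "ev G D l q = (\<lambda>y. sum_list (map (\<lambda>z. basis_vec z y) [a, b, E, F]) :: 'r)"
  proof
    fix y
    show "ev G D l q y = (sum_list (map (\<lambda>z. basis_vec z y) [a, b, E, F]) :: 'r)"
      using f unfolding l ev_tri[OF t]
      by (simp add: bprod_coll bprod_non E_def[symmetric] F_def[symmetric] ac_simps h)
  qed
  have fl: "finite l" "{y. line_vec l y \<noteq> (0::'r)} \<subseteq> l" using l by (auto simp: line_vec_def)
  have "matsuo_mult G D (line_vec l) (ev G D l q) x
     = (sum_list (map (\<lambda>z. \<Sum>p\<in>l. line_vec l p * matsuo_bprod G D p z x) [a, b, E, F]) :: 'r)"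
    unfolding evq by (rule comb[OF fl])
  also have "\<dots> = ev G D l a x + ev G D l b x + ev G D l E x + ev G D l F x"
    by (simp add: ev_def ac_simps)
  also have "ev G D l a x = (0::'r)" using ev_in_set[OF t l _ two] l by auto
  also have "ev G D l b x = (0::'r)" using ev_in_set[OF t l _ two] l by auto
  also have "ev G D l E x = (basis_vec a x::'r) + basis_vec E x + basis_vec q x + (basis_vec c x + basis_vec E x + basis_vec F x)"
    unfolding l ev_tri[OF t] using TF1 WW1 by (simp add: bprod_coll bprod_non)
  also have "ev G D l F x = (basis_vec b x::'r) + basis_vec F x + basis_vec q x + (basis_vec c x + basis_vec F x + basis_vec E x)"
    unfolding l ev_tri[OF t] using TF2 WW2 by (simp add: bprod_coll bprod_non)
  also have "ev G D l q x = (basis_vec a x::'r) + basis_vec b x + basis_vec E x + basis_vec F x"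
    using evq by (simp add: ac_simps)
  ultimately show "matsuo_mult G D (line_vec l) (ev G D l q) x = (ev G D l q x :: 'r)"
    by (simp add: ac_simps h)
qed

lemma three_imp:
  assumes t: "tri a b c" and l: "l = {a,b,c}" and lL: "l \<in> flines G D" and sy: "symplectic_type G D"
    and q: "q \<in> D" "q \<notin> {a,b,c}"
    and f: "fcoll G D a q" "fcoll G D b q" "fcoll G D c q"
  shows False
proof -
  note P = tri_props[OF t]
  have t2: "tri a c b" "tri b c a" using t tri_swap12 tri_swap23 by blast+
  define m where "m = {a, q, fwedge G a q}"
  define n2 where "n2 = {b, q, fwedge G b q}"
  define n3 where "n3 = {c, q, fwedge G c q}"
  have mL: "m \<in> flines G D" "n2 \<in> flines G D" "n3 \<in> flines G D"
    unfolding m_def n2_def n3_def flines_def using f by blast+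
  have "l \<noteq> m" using q unfolding l m_def by auto
  moreover have "l \<inter> m \<noteq> {}" unfolding l m_def by auto
  ultimately have CQ: "complete_quadrilateral G D (fgen G D (l \<union> m))"
    using sy lL mL(1) unfolding symplectic_type_def by blast
  define S where "S = fgen G D (l \<union> m)"
  have sub: "l \<union> m \<subseteq> S" unfolding S_def by (rule fgen_sup)
  have inS: "a \<in> S" "b \<in> S" "c \<in> S" "q \<in> S" using sub unfolding l m_def by auto
  have wS: "fwedge G a q \<in> S" "fwedge G b q \<in> S" "fwedge G c q \<in> S"
    using fgen_closed[of _ G D "l \<union> m"] inS f unfolding S_def by blast+
  have sS: "m \<subseteq> S" "n2 \<subseteq> S" "n3 \<subseteq> S" using inS wS unfolding m_def n2_def n3_def by auto
  have K: "card {l' \<in> flines G D. l' \<subseteq> S \<and> q \<in> l'} = 2"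
    using CQ inS unfolding complete_quadrilateral_def S_def by blast
  have ab': "c = fwedge G a b" "b = fwedge G a c" "a = fwedge G b c"
    using t t2 unfolding tri_def by blast+
  have ab: "fwedge G a b = c" "fwedge G a c = b" "fwedge G b c = a"
    using ab'(1) apply (rule sym) using ab'(2) apply (rule sym) using ab'(3) by (rule sym)
  have n1: "fwedge G a q \<noteq> b"
  proof
    assume "fwedge G a q = b"
    then have "fwedge G a b = q" using wedge_back P q by metis
    then show False using ab q by auto
  qed
  have n2': "fwedge G a q \<noteq> c"
  proof
    assume "fwedge G a q = c"
    then have "fwedge G a c = q" using wedge_back P q by metis
    then show False using ab q by auto
  qed
  have n3': "fwedge G b q \<noteq> c"
  proof
    assume "fwedge G b q = c"
    then have "fwedge G b c = q" using wedge_back P q by metis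
    then show False using ab q by auto
  qed
  have bm: "b \<notin> m" unfolding m_def using P(4) q(2) n1 by blast
  have cm: "c \<notin> m" unfolding m_def using P(5) q(2) n2' by blast
  have cn: "c \<notin> n2" unfolding n2_def using P(6) q(2) n3' by blast
  have d1: "m \<noteq> n2" using bm unfolding n2_def by blast
  have d2: "m \<noteq> n3" using cm unfolding n3_def by blast
  have d3: "n2 \<noteq> n3" using cn unfolding n3_def by blast
  have fin: "finite {l' \<in> flines G D. l' \<subseteq> S \<and> q \<in> l'}"
  proof (rule ccontr)
    assume "\<not> finite {l' \<in> flines G D. l' \<subseteq> S \<and> q \<in> l'}"
    then have "card {l' \<in> flines G D. l' \<subseteq> S \<and> q \<in> l'} = 0" by (rule card.infinite)
    then show False using K by simp
  qed
  have qin: "q \<in> m" "q \<in> n2" "q \<in> n3" unfolding m_def n2_def n3_def by simp_all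
  have "{m, n2, n3} \<subseteq> {l' \<in> flines G D. l' \<subseteq> S \<and> q \<in> l'}"
    using mL sS qin by blast
  then have "card {m, n2, n3} \<le> 2" using card_mono[OF fin] K by metis
  moreover have "card {m, n2, n3} = 3" using d1 d2 d3 by simp
  ultimately show False by simp
qed

lemma point:
  assumes t: "tri a b c" and l: "l = {a,b,c}" and lL: "l \<in> flines G D" and sy: "symplectic_type G D"
    and q: "q \<in> D" and two: "(2::'r::comm_ring_1) = 0"
  shows "matsuo_mult G D (line_vec l) (ev G D l q) = (ev G D l q :: 'a \<Rightarrow> 'r)"
proof (cases "q \<in> {a,b,c}")
  case True
  have "q \<in> l" using True l by simp
  then have "ev G D l q = (\<lambda>x. 0::'r)" by (rule ev_in_set[OF t l _ two])
  then show ?thesis by (simp add: mult_zero)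
next
  case False
  have t': "tri a c b" "tri b c a" "tri b a c" "tri c a b" using t tri_swap12 tri_swap23 by blast+
  have ls: "l = {a,c,b}" "l = {b,c,a}" using l by auto
  have qs: "q \<notin> {a,c,b}" "q \<notin> {b,c,a}" "q \<notin> {b,a,c}" "q \<notin> {c,a,b}" using False by auto
  consider "fcoll G D a q" "fcoll G D b q" "fcoll G D c q"
    | "fcoll G D a q" "fcoll G D b q" "\<not> fcoll G D c q"
    | "fcoll G D a q" "\<not> fcoll G D b q" "fcoll G D c q"
    | "\<not> fcoll G D a q" "fcoll G D b q" "fcoll G D c q"
    | "\<not> fcoll G D b q" "\<not> fcoll G D c q"
    | "\<not> fcoll G D a q" "\<not> fcoll G D c q"
    | "\<not> fcoll G D a q" "\<not> fcoll G D b q"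
    by blast
  then show ?thesis
  proof cases
    case 1 then show ?thesis using three_imp[OF t l lL sy q False] by blast
  next
    case 2 then show ?thesis using two_case[OF t l q False _ _ _ two] by blast
  next
    case 3 then show ?thesis using two_case[OF t'(1) ls(1) q qs(1) _ _ _ two] by blast
  next
    case 4 then show ?thesis using two_case[OF t'(2) ls(2) q qs(2) _ _ _ two] by blast
  next
    case 5
    then have "\<not> fcoll G D a q" using one_imp[OF t q False] by blast
    with 5 have "ev G D l q = (\<lambda>x. 0::'r)"
      unfolding l by (auto simp: ev_tri[OF t] bprod_non)
    then show ?thesis by (simp add: mult_zero)
  next
    case 6
    then have "\<not> fcoll G D b q" using one_imp[OF t'(3) q qs(3)] by blast
    with 6 have "ev G D l q = (\<lambda>x. 0::'r)"
      unfolding l by (auto simp: ev_tri[OF t] bprod_non)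
    then show ?thesis by (simp add: mult_zero)
  next
    case 7
    then have "\<not> fcoll G D c q" using one_imp[OF t'(4) q qs(4)] by blast
    with 7 have "ev G D l q = (\<lambda>x. 0::'r)"
      unfolding l by (auto simp: ev_tri[OF t] bprod_non)
    then show ?thesis by (simp add: mult_zero)
  qed
qed

end
lemma tt_intro: fixes G (structure) assumes "three_transposition_group G D" shows "tt G D"
proof -
  from assms have grp: "group G" and DG: "D \<subseteq> carrier G"
    and cl: "\<exists>d \<in> carrier G. D = {inv\<^bsub>G\<^esub> g \<otimes>\<^bsub>G\<^esub> d \<otimes>\<^bsub>G\<^esub> g | g. g \<in> carrier G}"
    and inv: "\<forall>d \<in> D. d \<noteq> \<one>\<^bsub>G\<^esub> \<and> d \<otimes>\<^bsub>G\<^esub> d = \<one>\<^bsub>G\<^esub>"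
    and o3: "\<forall>d \<in> D. \<forall>e \<in> D. \<exists>n::nat. 1 \<le> n \<and> n \<le> 3 \<and> (d \<otimes>\<^bsub>G\<^esub> e) [^]\<^bsub>G\<^esub> n = \<one>\<^bsub>G\<^esub>"
    unfolding three_transposition_group_def by blast+
  interpret group G by (rule grp)
  obtain d where d: "d \<in> carrier G" "D = {inv g \<otimes> d \<otimes> g | g. g \<in> carrier G}" using cl by blast
  show ?thesis
  proof (unfold_locales)
    show "D \<subseteq> carrier G" by (rule DG)
    fix x h assume x: "x \<in> D" and h: "h \<in> carrier G"
    then obtain g where g: "g \<in> carrier G" "x = inv g \<otimes> d \<otimes> g" using d by blast
    have "inv h \<otimes> x \<otimes> h = inv (g \<otimes> h) \<otimes> d \<otimes> (g \<otimes> h)"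
      using g h d by (simp add: inv_mult_group m_assoc)
    moreover have "g \<otimes> h \<in> carrier G" using g h by simp
    ultimately show "inv h \<otimes> x \<otimes> h \<in> D" using d by blast
  next
    fix x assume "x \<in> D" then show "x \<otimes> x = \<one>" using inv by blast
  next
    fix x y assume "x \<in> D" "y \<in> D"
    then show "\<exists>n::nat. 1 \<le> n \<and> n \<le> 3 \<and> (x \<otimes> y) [^] n = \<one>" using o3 by blast
  qed
qed

theorem lemma5p10:
  fixes G :: "('a, 'b) monoid_scheme" and D :: "'a set"
    and l :: "'a set" and v :: "'a \<Rightarrow> 'r::comm_ring_1"
  assumes "three_transposition_group G D"
    and "symplectic_type G D"
    and "(2::'r) = 0"
    and "l \<in> flines G D"
    and "v \<in> matsuo_carrier D"
  shows "matsuo_mult G D (line_vec l) (matsuo_mult G D (line_vec l) v)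
         = matsuo_mult G D (line_vec l) v"
proof
  fix x
  have TT: "tt G D" by (rule tt_intro[OF assms(1)])
  obtain a b where ab: "fcoll G D a b" "l = {a, b, fwedge G a b}" using assms(4) unfolding flines_def by blast
  define c where "c = fwedge G a b"
  have t: "tt.tri G D a b c" unfolding tt.tri_def[OF TT] c_def using ab by simp
  have l: "l = {a,b,c}" using ab c_def by simp
  have PT: "\<And>q. q \<in> D \<Longrightarrow> matsuo_mult G D (line_vec l) (ev G D l q) = (ev G D l q :: 'a \<Rightarrow> 'r)"
    by (rule tt.point[OF TT t l assms(4) assms(2) _ assms(3)])
  define V where "V = {y. v y \<noteq> 0}"
  have fV: "finite V" and VD: "V \<subseteq> D" using assms(5) unfolding matsuo_carrier_def V_def by auto
  have fl: "finite l" "{y. line_vec l y \<noteq> (0::'r)} \<subseteq> l" using l by (auto simp: line_vec_def)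
  define w where "w = matsuo_mult G D (line_vec l) v"
  have hw: "\<And>y. w y = (\<Sum>q\<in>V. v q * ev G D l q y)"
    unfolding w_def ev_def by (rule sumform[OF fl fV]) (simp add: V_def)
  define W where "W = (\<Union>q\<in>V. \<Union>p\<in>l. {p, q, fwedge G p q})"
  have fW: "finite W" unfolding W_def using fV fl(1) by auto
  have sev: "{y. ev G D l q y \<noteq> (0::'r)} \<subseteq> W" if qV: "q \<in> V" for q
  proof
    fix y assume "y \<in> {y. ev G D l q y \<noteq> (0::'r)}"
    then have "(\<Sum>p\<in>l. line_vec l p * matsuo_bprod G D p q y) \<noteq> (0::'r)" by (simp add: ev_def)
    then obtain p where p: "p \<in> l" "line_vec l p * matsuo_bprod G D p q y \<noteq> (0::'r)"
      using sum.not_neutral_contains_not_neutral by blast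
    then have "matsuo_bprod G D p q y \<noteq> (0::'r)" by auto
    then have "y \<in> {p, q, fwedge G p q}" by (rule bprod_supp)
    then show "y \<in> W" unfolding W_def using p(1) qV by blast
  qed
  have sw: "{y. w y \<noteq> 0} \<subseteq> W"
  proof
    fix y assume "y \<in> {y. w y \<noteq> 0}"
    then have "(\<Sum>q\<in>V. v q * ev G D l q y) \<noteq> 0" using hw by simp
    then obtain q where q: "q \<in> V" "v q * ev G D l q y \<noteq> 0"
      using sum.not_neutral_contains_not_neutral by blast
    then have "ev G D l q y \<noteq> (0::'r)" by auto
    then show "y \<in> W" using sev[OF q(1)] by blast
  qed
  have "matsuo_mult G D (line_vec l) w x = (\<Sum>r\<in>W. w r * (\<Sum>p\<in>l. line_vec l p * matsuo_bprod G D p r x))"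
    by (rule sumform[OF fl fW sw])
  also have "\<dots> = (\<Sum>r\<in>W. (\<Sum>q\<in>V. v q * ev G D l q r) * ev G D l r x)"
    by (simp add: hw ev_def)
  also have "\<dots> = (\<Sum>r\<in>W. \<Sum>q\<in>V. v q * (ev G D l q r * ev G D l r x))"
    by (rule sum.cong[OF refl]) (simp add: sum_distrib_right sum_distrib_left mult.left_commute mult.commute)
  also have "\<dots> = (\<Sum>q\<in>V. v q * (\<Sum>r\<in>W. ev G D l q r * ev G D l r x))"
    by (simp add: sum.swap[of _ W] sum_distrib_left)
  also have "\<dots> = (\<Sum>q\<in>V. v q * matsuo_mult G D (line_vec l) (ev G D l q) x)"
  proof (rule sum.cong[OF refl])
    fix q assume q: "q \<in> V"
    have "matsuo_mult G D (line_vec l) (ev G D l q :: 'a \<Rightarrow> 'r) x = (\<Sum>r\<in>W. ev G D l q r * (\<Sum>p\<in>l. line_vec l p * matsuo_bprod G D p r x))"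
      by (rule sumform[OF fl fW sev[OF q]])
    then show "v q * (\<Sum>r\<in>W. ev G D l q r * ev G D l r x) = v q * matsuo_mult G D (line_vec l) (ev G D l q) x"
      by (simp add: ev_def)
  qed
  also have "\<dots> = (\<Sum>q\<in>V. v q * ev G D l q x)"
    using PT VD by (intro sum.cong refl) auto
  also have "\<dots> = w x" by (simp add: hw)
  finally show "matsuo_mult G D (line_vec l) (matsuo_mult G D (line_vec l) v) x = matsuo_mult G D (line_vec l) v x"
    unfolding w_def .
qed

end
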